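(* Let $T>0$ and let $(\psi,r)$ be a (differentiable) solution on $[0,T]$ of the adjoint least squares shadowing (LSS) system $$\frac{d\psi}{dt}+f_u^*\psi+J_u=r,\qquad \psi(0)=0,\ \psi(T)=0,\qquad \frac{dr}{dt}-f_u r=\frac{1}{\alpha^2}\big(\psi^Tf+J-\bar J\big)f .$$ Let $\psi^\infty$ be the adjoint shadowing direction and let $e(t)=\psi(t)-\psi^\infty(t)$. Then $e$ satisfies $$\mathcal{L}e:=-\frac{d^2e}{dt^2}-\frac{d}{dt}\big(f_u^*e\big)+f_u\frac{de}{dt}+f_uf_u^*e+\frac{1}{\alpha^2}ff^Te=0\quad\text{on }[0,T],\qquad e(0)=-\psi^\infty(0),\ e(T)=-\psi^\infty(T).$$
   Context: Let $X=\mathbb{R}^n$ with inner product $x^Ty$. Let $f:X\times\mathbb{R}\to X$ be $C^2$, fix $s\in\mathbb{R}$, and let $u(t)$, $t\ge0$, solve $\frac{du}{dt}=f(u,s)$. Write $f(t)=f(u(t),s)$, $f_u(t)=\partial f/\partial u$ at $(u(t),s)$, and $f_u^*=f_u^T$. Let $J:X\times\mathbb{R}\to\mathbb{R}$ be smooth, with $J(t)=J(u(t),s)$, $J_u(t)$ its $u$-gradient (column vector), and $\bar J=\lim_{T\to\infty}\frac1T\int_0^TJ\,dt$, assumed to exist. The constant $\alpha^2>0$ is fixed. The adjoint shadowing direction $\psi^\infty:[0,\infty)\to X$ is a bounded differentiable solution of $\frac{d\psi^\infty}{dt}+f_u^*\psi^\infty+J_u=0$ satisfying $\lim_{T\to\infty}\frac1T\int_0^T\psi^{\infty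 T}f\,dt=0$; it is assumed to exist. *)

theory Defs
  imports "HOL-Analysis.Analysis"
begin

definition C2 :: "('a::real_normed_vector \<Rightarrow> 'b::real_normed_vector) \<Rightarrow> bool" where
  "C2 F \<longleftrightarrow> (\<exists>D D2. (\<forall>x. (F has_derivative blinfun_apply (D x)) (at x)) \<and>
                     (\<forall>x. (D has_derivative blinfun_apply (D2 x)) (at x)) \<and>
                     continuous_on UNIV D2)"

fun iter_dd :: "'a::real_normed_vector list \<Rightarrow> ('a \<Rightarrow> real) \<Rightarrow> ('a \<Rightarrow> real)" where
  "iter_dd [] F = F"
| "iter_dd (d # ds) F = iter_dd ds (\<lambda>x. frechet_derivative F (at x) d)"

definition smooth_real :: "('a::euclidean_space \<Rightarrow> real) \<Rightarrow> bool" where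
  "smooth_real F \<longleftrightarrow> (\<forall>ds \<in> lists Basis. \<forall>x. iter_dd ds F differentiable at x)"

end

theory Submission
  imports Defs
begin

lemma transpose_inner:
  fixes A :: "real^'n^'n"
  shows "(transpose A *v p) \<bullet> q = p \<bullet> (A *v q)"
  by (simp add: dot_lmul_matrix)

lemma vmult_comp:
  fixes A :: "real^'n^'n"
  shows "(x v* A) $ i = x \<bullet> (A *v axis i 1)"
  by (simp add: vector_matrix_mult_def matrix_vector_mult_def inner_vec_def axis_def
      if_distrib mult.commute cong: if_cong)

lemma sum_axis_comp:
  fixes c :: "'n::finite \<Rightarrow> real"
  shows "(\<Sum>x\<in>UNIV. c x * (axis x 1 :: real^'n) $ i) = c i"
  by (simp add: axis_def if_distrib cong: if_cong)

theorem mainTheorem2: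
  fixes f :: "(real^'n) \<times> real \<Rightarrow> real^'n"
    and J :: "(real^'n) \<times> real \<Rightarrow> real"
    and s :: real
    and u :: "real \<Rightarrow> real^'n"
    and fu :: "real^'n \<Rightarrow> real^'n^'n"
    and Ju :: "real^'n \<Rightarrow> real^'n"
    and Jbar alpha T :: real
    and psiInf psi r :: "real \<Rightarrow> real^'n"
  assumes f_C2: "C2 f"
    and J_smooth: "smooth_real J"
    and fu_def: "\<And>x. ((\<lambda>v. f (v, s)) has_derivative (\<lambda>h. fu x *v h)) (at x)"
    and Ju_def: "\<And>x. ((\<lambda>v. J (v, s)) has_derivative (\<lambda>h. Ju x \<bullet> h)) (at x)"
    and u_ode: "\<And>t. t \<ge> 0 \<Longrightarrow> (u has_vector_derivative f (u t, s)) (at t within {0..})"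
    and Jbar_def: "((\<lambda>T. (1 / T) * integral {0..T} (\<lambda>t. J (u t, s))) \<longlongrightarrow> Jbar) at_top"
    and alpha: "alpha \<noteq> 0"
    and psiInf_bdd: "bounded (psiInf ` {0..})"
    and psiInf_ode: "\<And>t. t \<ge> 0 \<Longrightarrow>
          (psiInf has_vector_derivative (- (transpose (fu (u t)) *v psiInf t) - Ju (u t)))
            (at t within {0..})"
    and psiInf_avg: "((\<lambda>T. (1 / T) * integral {0..T} (\<lambda>t. psiInf t \<bullet> f (u t, s))) \<longlongrightarrow> 0) at_top"
    and T_pos: "T > 0"
    and psi_ode: "\<And>t. t \<in> {0..T} \<Longrightarrow>
          (psi has_vector_derivative (r t - transpose (fu (u t)) *v psi t - Ju (u t)))
            (at t within {0..T})"
    and psi_0: "psi 0 = 0"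
    and psi_T: "psi T = 0"
    and r_ode: "\<And>t. t \<in> {0..T} \<Longrightarrow>
          (r has_vector_derivative
             (fu (u t) *v r t
              + (1 / alpha\<^sup>2) *\<^sub>R ((psi t \<bullet> f (u t, s) + J (u t, s) - Jbar) *\<^sub>R f (u t, s))))
            (at t within {0..T})"
  shows "(\<forall>t\<in>{0..T}. \<exists>e' e'' g'.
            ((\<lambda>\<tau>. psi \<tau> - psiInf \<tau>) has_vector_derivative e') (at t within {0..T}) \<and>
            ((\<lambda>\<tau>. vector_derivative (\<lambda>\<sigma>. psi \<sigma> - psiInf \<sigma>) (at \<tau> within {0..T}))
                has_vector_derivative e'') (at t within {0..T}) \<and>
            ((\<lambda>\<tau>. transpose (fu (u \<tau>)) *v (psi \<tau> - psiInf \<tau>))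
                has_vector_derivative g') (at t within {0..T}) \<and>
            - e'' - g' + fu (u t) *v e'
              + fu (u t) *v (transpose (fu (u t)) *v (psi t - psiInf t))
              + (1 / alpha\<^sup>2) *\<^sub>R ((f (u t, s) \<bullet> (psi t - psiInf t)) *\<^sub>R f (u t, s)) = 0)
        \<and> psi 0 - psiInf 0 = - psiInf 0
        \<and> psi T - psiInf T = - psiInf T"
proof -
  define F where "F = (\<lambda>t. f (u t, s))"
  define H where "H = (\<lambda>t. psiInf t \<bullet> F t + J (u t, s))"
  have Fd: "(F has_vector_derivative fu (u t) *v F t) (at t within {0..})" if "t \<ge> 0" for t
  proof -
    have "(((\<lambda>v. f (v, s)) \<circ> u) has_vector_derivative fu (u t) *v f (u t, s)) (at t within {0..})"
      by (rule vector_derivative_diff_chain_within[OF u_ode[OF that] has_derivative_at_withinI[OF fu_def]])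
    then show ?thesis by (simp add: F_def o_def)
  qed
  have Jd: "((\<lambda>t. J (u t, s)) has_vector_derivative Ju (u t) \<bullet> F t) (at t within {0..})" if "t \<ge> 0" for t
  proof -
    have "(((\<lambda>v. J (v, s)) \<circ> u) has_vector_derivative Ju (u t) \<bullet> f (u t, s)) (at t within {0..})"
      by (rule vector_derivative_diff_chain_within[OF u_ode[OF that] has_derivative_at_withinI[OF Ju_def]])
    then show ?thesis by (simp add: F_def o_def)
  qed
  have Hd: "(H has_derivative (\<lambda>h. 0)) (at t within {0..})" if "t \<in> {0..}" for t
  proof -
    have t: "t \<ge> 0" using that by simp
    have "(H has_derivative (\<lambda>h. psiInf t \<bullet> (h *\<^sub>R (fu (u t) *v F t))
            + (h *\<^sub>R (- (transpose (fu (u t)) *v psiInf t) - Ju (u t))) \<bullet> F t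
            + h *\<^sub>R (Ju (u t) \<bullet> F t))) (at t within {0..})"
      unfolding H_def
      apply (rule has_derivative_add)
       apply (rule has_derivative_inner)
      using psiInf_ode[OF t] Fd[OF t] Jd[OF t] by (auto simp: has_vector_derivative_def)
    moreover have "(\<lambda>h. psiInf t \<bullet> (h *\<^sub>R (fu (u t) *v F t))
            + (h *\<^sub>R (- (transpose (fu (u t)) *v psiInf t) - Ju (u t))) \<bullet> F t
            + h *\<^sub>R (Ju (u t) \<bullet> F t)) = (\<lambda>h. 0)"
      by (rule ext) (simp add: algebra_simps dot_lmul_matrix)
    ultimately show ?thesis by simp
  qed
  obtain c where c: "\<And>t. t \<in> {0..} \<Longrightarrow> H t = c"
    using has_derivative_zero_constant[of "{0..}" H] Hd by (auto simp: convex_real_interval)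
  have Hcont: "continuous_on {0..T'} (\<lambda>t. J (u t, s))" for T'
  proof -
    have "continuous (at t within {0..T'}) (\<lambda>t. J (u t, s))" if "t \<in> {0..T'}" for t
      using that Jd[of t]
      by (metis atLeastAtMost_iff atLeast_iff continuous_within_subset has_vector_derivative_continuous subsetI)
    then show ?thesis by (simp add: continuous_on_eq_continuous_within)
  qed
  have ev: "\<forall>\<^sub>F T' in at_top. (1 / T') * integral {0..T'} (\<lambda>t. psiInf t \<bullet> f (u t, s))
            + (1 / T') * integral {0..T'} (\<lambda>t. J (u t, s)) = c"
    unfolding eventually_at_top_linorder
  proof (intro exI allI impI)
    fix T' :: real assume T': "T' \<ge> 1"
    have "integral {0..T'} (\<lambda>t. psiInf t \<bullet> f (u t, s)) = integral {0..T'} (\<lambda>t. c - J (u t, s))"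
      by (rule integral_cong) (use c in \<open>auto simp: H_def F_def algebra_simps\<close>)
    also have "\<dots> = T' * c - integral {0..T'} (\<lambda>t. J (u t, s))"
      using T' by (subst integral_diff) (auto intro: integrable_continuous_interval Hcont)
    finally show "(1 / T') * integral {0..T'} (\<lambda>t. psiInf t \<bullet> f (u t, s))
            + (1 / T') * integral {0..T'} (\<lambda>t. J (u t, s)) = c"
      using T' by (simp add: field_simps)
  qed
  have "((\<lambda>T'. (1 / T') * integral {0..T'} (\<lambda>t. psiInf t \<bullet> f (u t, s))
            + (1 / T') * integral {0..T'} (\<lambda>t. J (u t, s))) \<longlongrightarrow> 0 + Jbar) at_top"
    by (intro tendsto_add psiInf_avg Jbar_def)
  moreover have "((\<lambda>T'. (1 / T') * integral {0..T'} (\<lambda>t. psiInf t \<bullet> f (u t, s))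
            + (1 / T') * integral {0..T'} (\<lambda>t. J (u t, s))) \<longlongrightarrow> c) at_top"
    by (rule tendsto_eventually) (use ev in \<open>simp add: eventually_mono\<close>)
  ultimately have "c = 0 + Jbar" by (rule tendsto_unique[OF trivial_limit_at_top_linorder, rotated])
  then have cJ: "c = Jbar" by simp
  have key: "psiInf t \<bullet> f (u t, s) + J (u t, s) = Jbar" if "t \<ge> 0" for t
    using c[of t] that cJ by (simp add: H_def F_def)
  obtain D D2 where D: "\<And>x. (f has_derivative blinfun_apply (D x)) (at x)"
    and D2: "\<And>x. (D has_derivative blinfun_apply (D2 x)) (at x)"
    using f_C2 unfolding C2_def by blast
  have fuD: "fu v *v h = blinfun_apply (D (v, s)) (h, 0)" for v h
  proof -
    have "((\<lambda>v. f (v, s)) has_derivative (\<lambda>h. blinfun_apply (D (v, s)) (h, 0))) (at v)"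
      using has_derivative_compose[OF has_derivative_Pair[OF has_derivative_ident has_derivative_const] D]
      by simp
    from has_derivative_unique[OF fu_def this] show ?thesis by meson
  qed
  define E where "E = (\<lambda>\<tau>. psi \<tau> - psiInf \<tau>)"
  define g where "g = (\<lambda>\<tau>. transpose (fu (u \<tau>)) *v E \<tau>)"
  define G where "G = (\<lambda>\<tau>. \<Sum>i\<in>UNIV. (E \<tau> \<bullet> blinfun_apply (D (u \<tau>, s)) (axis i 1, 0)) *\<^sub>R (axis i 1 :: real^'n))"
  have gG: "g = G"
  proof (rule ext)
    fix \<tau>
    show "g \<tau> = G \<tau>"
      unfolding g_def G_def
      by (simp add: vec_eq_iff sum_axis_comp vmult_comp flip: fuD)
  qed
  have Ed: "(E has_vector_derivative (r t - g t)) (at t within {0..T})" if t: "t \<in> {0..T}" for t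
  proof -
    have "(psiInf has_vector_derivative (- (transpose (fu (u t)) *v psiInf t) - Ju (u t))) (at t within {0..T})"
      by (rule has_vector_derivative_within_subset[OF psiInf_ode]) (use t in auto)
    from has_vector_derivative_diff[OF psi_ode[OF t] this] show ?thesis
      unfolding E_def g_def by (simp add: algebra_simps)
  qed
  have vd: "vector_derivative E (at \<tau> within {0..T}) = r \<tau> - g \<tau>" if "\<tau> \<in> {0..T}" for \<tau>
    by (rule vector_derivative_within_closed_interval[OF T_pos that Ed[OF that]])
  have gdiff: "g differentiable (at t within {0..T})" if t: "t \<in> {0..T}" for t
  proof -
    have ud: "u differentiable (at t within {0..T})"
      by (rule differentiableI_vector, rule has_vector_derivative_within_subset[OF u_ode]) (use t in auto)
    have Edf: "E differentiable (at t within {0..T})"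
      by (rule differentiableI_vector[OF Ed[OF t]])
    have Dd: "(\<lambda>\<tau>. D (u \<tau>, s)) differentiable (at t within {0..T})"
    proof -
      have "(\<lambda>\<tau>. (u \<tau>, s)) differentiable (at t within {0..T})"
        using ud unfolding differentiable_def by (blast intro: has_derivative_Pair[OF _ has_derivative_const])
      moreover have "D differentiable (at (u t, s) within (\<lambda>\<tau>. (u \<tau>, s)) ` {0..T})"
        using D2 unfolding differentiable_def by (blast intro: has_derivative_at_withinI)
      ultimately show ?thesis using differentiable_chain_within[of "\<lambda>\<tau>. (u \<tau>, s)" t "{0..T}" D]
        by (simp add: o_def)
    qed
    have "G differentiable (at t within {0..T})"
      unfolding G_def
    proof (intro differentiable_sum differentiable_scaleR differentiable_inner Edf differentiable_const ballI)
      fix i :: 'n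
      have "bounded_linear (\<lambda>B. blinfun_apply B (axis i 1 :: real^'n, 0::real))" by simp
      then have "(\<lambda>B. blinfun_apply B (axis i 1 :: real^'n, 0::real)) differentiable (at (D (u t, s)) within (\<lambda>\<tau>. D (u \<tau>, s)) ` {0..T})"
        by (simp add: bounded_linear_imp_differentiable)
      from differentiable_chain_within[OF Dd this]
      show "(\<lambda>\<tau>. blinfun_apply (D (u \<tau>, s)) (axis i 1, 0)) differentiable (at t within {0..T})"
        by (simp add: o_def)
    qed simp
    then show ?thesis using gG by simp
  qed
  show ?thesis
  proof (intro conjI ballI)
    fix t assume t: "t \<in> {0..T}"
    define g' where "g' = vector_derivative g (at t within {0..T})"
    have gd: "(g has_vector_derivative g') (at t within {0..T})"
      unfolding g'_def using gdiff[OF t] by (rule vector_derivative_works[THEN iffD1])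
    define r' where "r' = fu (u t) *v r t
              + (1 / alpha\<^sup>2) *\<^sub>R ((psi t \<bullet> f (u t, s) + J (u t, s) - Jbar) *\<^sub>R f (u t, s))"
    have e2: "((\<lambda>\<tau>. vector_derivative E (at \<tau> within {0..T})) has_vector_derivative r' - g') (at t within {0..T})"
      by (rule has_vector_derivative_transform[OF t vd has_vector_derivative_diff[OF r_ode[OF t, folded r'_def] gd]])
    have eq: "- (r' - g') - g' + fu (u t) *v (r t - g t)
              + fu (u t) *v (transpose (fu (u t)) *v (psi t - psiInf t))
              + (1 / alpha\<^sup>2) *\<^sub>R ((f (u t, s) \<bullet> (psi t - psiInf t)) *\<^sub>R f (u t, s)) = 0"
    proof -
      have k: "psiInf t \<bullet> f (u t, s) + J (u t, s) = Jbar" using key t by simp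
      have "f (u t, s) \<bullet> (psi t - psiInf t) = psi t \<bullet> f (u t, s) + J (u t, s) - Jbar"
        using k by (simp add: inner_diff_right inner_commute algebra_simps)
      then show ?thesis unfolding r'_def g_def E_def by (simp only:) (simp add: algebra_simps)
    qed
    show "\<exists>e' e'' g'.
            ((\<lambda>\<tau>. psi \<tau> - psiInf \<tau>) has_vector_derivative e') (at t within {0..T}) \<and>
            ((\<lambda>\<tau>. vector_derivative (\<lambda>\<sigma>. psi \<sigma> - psiInf \<sigma>) (at \<tau> within {0..T}))
                has_vector_derivative e'') (at t within {0..T}) \<and>
            ((\<lambda>\<tau>. transpose (fu (u \<tau>)) *v (psi \<tau> - psiInf \<tau>))
                has_vector_derivative g') (at t within {0..T}) \<and>
            - e'' - g' + fu (u t) *v e'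
              + fu (u t) *v (transpose (fu (u t)) *v (psi t - psiInf t))
              + (1 / alpha\<^sup>2) *\<^sub>R ((f (u t, s) \<bullet> (psi t - psiInf t)) *\<^sub>R f (u t, s)) = 0"
      apply (rule exI[of _ "r t - g t"], rule exI[of _ "r' - g'"], rule exI[of _ g'])
      using Ed[OF t] e2 gd eq unfolding E_def g_def by simp
  qed (simp_all add: psi_0 psi_T)
qed

end
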